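(* Let $K\ge2$ and $\alpha\in\mathbb{R}$, and define \[ C_{\alpha,K}:=2\cdot\inf\left\{\frac{D_\alpha(p\Vert q)}{\|p-q\|_1^2}: p,q\in\operatorname{relint}(\Delta^K),\ p\ne q\right\}. \] Then \[ C_{\alpha,K}=\inf\left\{\sum_{k=1}^K v_k^2\gamma_k^{\alpha-2}: v\in T^K,\ \gamma\in\operatorname{relint}(\Delta^K)\right\}, \] where $T^K:=\{v\in\mathbb{R}^K:\|v\|_1=1,\ \sum_{k=1}^K v_k=0\}$.
   Context: $\Delta^K=\{p\in[0,1]^K:\sum_k p_k=1\}$, $\operatorname{relint}(\Delta^K)=\Delta^K\cap(0,1)^K$. For $p\in(0,+\infty)^K$: $S_\alpha(p)=\frac{\sum_k p_k^\alpha}{\alpha(1-\alpha)}$ if $\alpha\notin\{0,1\}$, $S_0(p)=\sum_k\ln p_k$, $S_1(p)=-\sum_k p_k\ln p_k$. $D_\alpha(p\Vert q)=-S_\alpha(p)+S_\alpha(q)+\langle\nabla S_\alpha(q),p-q\rangle$ is the Bregman divergence of $-S_\alpha$ on $(0,+\infty)^K$. $\|x\|_1=\sum_k|x_k|$. *)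

theory Defs
  imports "HOL-Analysis.Analysis"
begin

text \<open>Vectors in R^K are represented as functions nat => real, with coordinates
  indexed by {..<K} (coordinates outside are irrelevant).\<close>

definition relint_simplex :: "nat \<Rightarrow> (nat \<Rightarrow> real) set" where
  "relint_simplex K = {p. (\<forall>k<K. 0 < p k \<and> p k < 1) \<and> (\<Sum>k<K. p k) = 1}"

definition S_alpha :: "real \<Rightarrow> nat \<Rightarrow> (nat \<Rightarrow> real) \<Rightarrow> real" where
  "S_alpha \<alpha> K p =
     (if \<alpha> = 0 then (\<Sum>k<K. ln (p k))
      else if \<alpha> = 1 then - (\<Sum>k<K. p k * ln (p k))
      else (\<Sum>k<K. p k powr \<alpha>) / (\<alpha> * (1 - \<alpha>)))"

text \<open>Partial derivative of S_alpha with respect to coordinate k, at a point q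
  with positive coordinates.\<close>
definition dS_alpha :: "real \<Rightarrow> (nat \<Rightarrow> real) \<Rightarrow> nat \<Rightarrow> real" where
  "dS_alpha \<alpha> q k =
     (if \<alpha> = 0 then 1 / q k
      else if \<alpha> = 1 then - ln (q k) - 1
      else q k powr (\<alpha> - 1) / (1 - \<alpha>))"

definition D_alpha :: "real \<Rightarrow> nat \<Rightarrow> (nat \<Rightarrow> real) \<Rightarrow> (nat \<Rightarrow> real) \<Rightarrow> real" where
  "D_alpha \<alpha> K p q = - S_alpha \<alpha> K p + S_alpha \<alpha> K q
      + (\<Sum>k<K. dS_alpha \<alpha> q k * (p k - q k))"

definition norm1 :: "nat \<Rightarrow> (nat \<Rightarrow> real) \<Rightarrow> real" where
  "norm1 K x = (\<Sum>k<K. \<bar>x k\<bar>)"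

definition T_set :: "nat \<Rightarrow> (nat \<Rightarrow> real) set" where
  "T_set K = {v. norm1 K v = 1 \<and> (\<Sum>k<K. v k) = 0}"

definition C_alpha :: "real \<Rightarrow> nat \<Rightarrow> real" where
  "C_alpha \<alpha> K = 2 * Inf {D_alpha \<alpha> K p q / (norm1 K (\<lambda>k. p k - q k))^2 | p q.
      p \<in> relint_simplex K \<and> q \<in> relint_simplex K \<and> (\<exists>k<K. p k \<noteq> q k)}"

end

theory Submission
  imports Defs
begin

lemma mono2:
  fixes G G1 G2 :: "real \<Rightarrow> real"
  assumes d1: "\<And>s. 0 \<le> s \<Longrightarrow> s \<le> t \<Longrightarrow> (G has_real_derivative G1 s) (at s)"
    and d2: "\<And>s. 0 \<le> s \<Longrightarrow> s \<le> t \<Longrightarrow> (G1 has_real_derivative G2 s) (at s)"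
    and nn: "\<And>s. 0 \<le> s \<Longrightarrow> s \<le> t \<Longrightarrow> G2 s \<ge> 0"
    and z: "G 0 = 0" "G1 0 = 0" and t: "0 \<le> t"
  shows "G t \<ge> 0"
proof -
  have g1: "G1 x \<ge> 0" if "0 \<le> x" "x \<le> t" for x
  proof -
    have "G1 0 \<le> G1 x"
      by (rule DERIV_nonneg_imp_nondecreasing[OF \<open>0 \<le> x\<close>]) (use d2 nn that in force)
    thus ?thesis using z by simp
  qed
  have "G 0 \<le> G t"
    by (rule DERIV_nonneg_imp_nondecreasing[OF t]) (use d1 g1 in force)
  thus ?thesis using z by simp
qed

lemma taylor2_ge:
  fixes f gd gdd :: "real \<Rightarrow> real" and a b :: "nat \<Rightarrow> real"
  assumes f': "\<And>x. x > 0 \<Longrightarrow> (f has_real_derivative gd x) (at x)"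
    and gd': "\<And>x. x > 0 \<Longrightarrow> (gd has_real_derivative gdd x) (at x)"
    and pos: "\<And>s k. 0 \<le> s \<Longrightarrow> s \<le> t \<Longrightarrow> k < K \<Longrightarrow> a k + s * b k > 0"
    and c: "\<And>s. 0 \<le> s \<Longrightarrow> s \<le> t \<Longrightarrow> c \<le> (\<Sum>k<K. gdd (a k + s * b k) * (b k)^2)"
    and t: "0 \<le> t"
  shows "c * t^2 / 2 \<le> (\<Sum>k<K. f (a k + t * b k) - f (a k) - gd (a k) * (t * b k))"
proof -
  define G where "G s = (\<Sum>k<K. f (a k + s * b k) - f (a k) - gd (a k) * (s * b k)) - (c/2) * s^2" for s
  define G1 where "G1 s = (\<Sum>k<K. gd (a k + s * b k) * b k - gd (a k) * b k) - c * s" for s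
  define G2 where "G2 s = (\<Sum>k<K. gdd (a k + s * b k) * (b k)^2) - c" for s
  have "G t \<ge> 0"
  proof (rule mono2[of t G G1 G2])
    fix s assume s: "0 \<le> s" "s \<le> t"
    show "(G has_real_derivative G1 s) (at s)"
      unfolding G_def G1_def
      apply (rule DERIV_cong)
      apply (rule derivative_eq_intros refl DERIV_sum)+
         apply (rule DERIV_chain2[OF f'])
          apply (use pos s in auto)[1]
         apply (rule derivative_eq_intros refl)+
      apply (simp add: algebra_simps)
      done
    show "(G1 has_real_derivative G2 s) (at s)"
      unfolding G1_def G2_def
      apply (rule DERIV_cong)
      apply (rule derivative_eq_intros refl DERIV_sum)+
         apply (rule DERIV_chain2[OF gd'])
          apply (use pos s in auto)[1]
         apply (rule derivative_eq_intros refl)+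
      apply (simp add: algebra_simps power2_eq_square)
      done
    show "G2 s \<ge> 0" using c[OF s] unfolding G2_def by simp
  qed (auto simp: G_def G1_def t)
  thus ?thesis unfolding G_def by simp
qed

definition fa :: "real \<Rightarrow> real \<Rightarrow> real" where
  "fa \<alpha> x = (if \<alpha> = 0 then - ln x else if \<alpha> = 1 then x * ln x
     else - (x powr \<alpha> / (\<alpha> * (1 - \<alpha>))))"

definition fa1 :: "real \<Rightarrow> real \<Rightarrow> real" where
  "fa1 \<alpha> x = (if \<alpha> = 0 then - (1 / x) else if \<alpha> = 1 then ln x + 1
     else - (x powr (\<alpha> - 1) / (1 - \<alpha>)))"

lemma D_eq:
  "D_alpha \<alpha> K p q = (\<Sum>k<K. fa \<alpha> (p k) - fa \<alpha> (q k) - fa1 \<alpha> (q k) * (p k - q k))"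
  unfolding D_alpha_def S_alpha_def dS_alpha_def fa_def fa1_def
  by (simp add: sum_subtractf sum_negf sum_divide_distrib algebra_simps sum.distrib)

lemma fa_deriv:
  assumes "x > 0"
  shows "(fa \<alpha> has_real_derivative fa1 \<alpha> x) (at x)"
proof -
  consider "\<alpha> = 0" | "\<alpha> = 1" | "\<alpha> \<noteq> 0" "\<alpha> \<noteq> 1" by blast
  then show ?thesis
  proof cases
    case 1
    then show ?thesis unfolding fa_def fa1_def using assms
      by (auto intro!: derivative_eq_intros simp: field_simps)
  next
    case 2
    then show ?thesis unfolding fa_def fa1_def using assms
      by (auto intro!: derivative_eq_intros simp: field_simps)
  next
    case 3
    have "((\<lambda>x. - (x powr \<alpha> / (\<alpha> * (1 - \<alpha>)))) has_real_derivative
        - (\<alpha> * x powr (\<alpha> - 1) / (\<alpha> * (1 - \<alpha>)))) (at x)"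
      by (intro DERIV_minus DERIV_cdivide has_real_derivative_powr assms)
    moreover have "- (\<alpha> * x powr (\<alpha> - 1) / (\<alpha> * (1 - \<alpha>))) = fa1 \<alpha> x"
      using 3 unfolding fa1_def by simp
    ultimately show ?thesis unfolding fa_def using 3 by simp
  qed
qed

lemma fa1_deriv:
  assumes "x > 0"
  shows "(fa1 \<alpha> has_real_derivative x powr (\<alpha> - 2)) (at x)"
proof -
  consider "\<alpha> = 0" | "\<alpha> = 1" | "\<alpha> \<noteq> 0" "\<alpha> \<noteq> 1" by blast
  then show ?thesis
  proof cases
    case 1
    have e: "x powr (-2) = 1 / x^2" using assms by (simp add: powr_minus powr_numeral divide_inverse)
    show ?thesis unfolding fa_def fa1_def using assms 1 e
      by (auto intro!: derivative_eq_intros simp: field_simps power2_eq_square)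
  next
    case 2
    have e: "x powr (-1) = 1 / x" using assms by (simp add: powr_minus divide_inverse)
    show ?thesis unfolding fa_def fa1_def using assms 2 e
      by (auto intro!: derivative_eq_intros simp: field_simps)
  next
    case 3
    have "((\<lambda>x. - (x powr (\<alpha> - 1) / (1 - \<alpha>))) has_real_derivative
        - ((\<alpha> - 1) * x powr (\<alpha> - 1 - 1) / (1 - \<alpha>))) (at x)"
      by (intro DERIV_minus DERIV_cdivide has_real_derivative_powr assms)
    moreover have "- ((\<alpha> - 1) * x powr (\<alpha> - 1 - 1) / (1 - \<alpha>)) = x powr (\<alpha> - 2)"
      using 3 by (simp add: field_simps)
    ultimately show ?thesis unfolding fa1_def using 3 by simp
  qed
qed

lemma conv:
  fixes x y s :: real
  assumes "0 < x" "x < 1" "0 < y" "y < 1" "0 \<le> s" "s \<le> 1"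
  shows "0 < x + s * (y - x) \<and> x + s * (y - x) < 1"
proof -
  have e: "x + s * (y - x) = (1 - s) * x + s * y" by algebra
  show ?thesis
  proof (cases "s = 0")
    case True then show ?thesis using assms by simp
  next
    case False
    then have "s > 0" using assms by simp
    have "0 \<le> (1 - s) * x" using assms by simp
    moreover have "0 < s * y" using \<open>s > 0\<close> assms by simp
    moreover have "(1 - s) * x \<le> (1 - s)" using assms by (simp add: mult_left_le)
    moreover have "s * y < s" using \<open>s > 0\<close> assms by simp
    ultimately show ?thesis unfolding e by linarith
  qed
qed

lemma lower:
  assumes p: "p \<in> relint_simplex K" and q: "q \<in> relint_simplex K"
    and ne: "\<exists>k<K. p k \<noteq> q k"
    and Rlb: "\<And>v \<gamma>. v \<in> T_set K \<Longrightarrow> \<gamma> \<in> relint_simplex K \<Longrightarrow>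
                R \<le> (\<Sum>k<K. (v k)^2 * (\<gamma> k) powr (\<alpha> - 2))"
  shows "R / 2 \<le> D_alpha \<alpha> K p q / (norm1 K (\<lambda>k. p k - q k))^2"
proof -
  define d where "d k = p k - q k" for k
  define n where "n = norm1 K d"
  obtain k0 where k0: "k0 < K" "p k0 \<noteq> q k0" using ne by blast
  have "n > 0" unfolding n_def norm1_def
    by (rule sum_pos2[of "{..<K}" k0]) (use k0 in \<open>auto simp: d_def\<close>)
  have sumd: "(\<Sum>k<K. d k) = 0"
    using p q unfolding d_def relint_simplex_def by (simp add: sum_subtractf)
  have "R * n^2 * 1^2 / 2 \<le> (\<Sum>k<K. fa \<alpha> (q k + 1 * d k) - fa \<alpha> (q k) - fa1 \<alpha> (q k) * (1 * d k))"
  proof (rule taylor2_ge[where gdd = "\<lambda>x. x powr (\<alpha> - 2)"])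
    show "\<And>x. 0 < x \<Longrightarrow> (fa \<alpha> has_real_derivative fa1 \<alpha> x) (at x)" by (rule fa_deriv)
    show "\<And>x. 0 < x \<Longrightarrow> (fa1 \<alpha> has_real_derivative x powr (\<alpha> - 2)) (at x)" by (rule fa1_deriv)
    show "0 < q k + s * d k" if "0 \<le> s" "s \<le> 1" "k < K" for s k
      using conv[of "q k" "p k" s] p q that unfolding relint_simplex_def d_def by auto
    show "R * n^2 \<le> (\<Sum>k<K. (q k + s * d k) powr (\<alpha> - 2) * (d k)^2)" if s: "0 \<le> s" "s \<le> 1" for s
    proof -
      define v where "v k = d k / n" for k
      define \<gamma> where "\<gamma> k = q k + s * d k" for k
      have "v \<in> T_set K"
        unfolding T_set_def norm1_def v_def using \<open>n > 0\<close> sumd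
        by (simp add: sum_divide_distrib[symmetric] n_def norm1_def)
      moreover have "\<gamma> \<in> relint_simplex K"
      proof -
        have "\<forall>k<K. 0 < \<gamma> k \<and> \<gamma> k < 1"
          using conv[of "q _" "p _" s] p q s unfolding relint_simplex_def d_def \<gamma>_def by auto
        moreover have "(\<Sum>k<K. \<gamma> k) = 1"
          using q sumd unfolding \<gamma>_def relint_simplex_def
          by (simp add: sum.distrib sum_distrib_left[symmetric])
        ultimately show ?thesis unfolding relint_simplex_def by simp
      qed
      ultimately have "R \<le> (\<Sum>k<K. (v k)^2 * (\<gamma> k) powr (\<alpha> - 2))" by (rule Rlb)
      also have "\<dots> = (\<Sum>k<K. (q k + s * d k) powr (\<alpha> - 2) * (d k)^2) / n^2"
        unfolding v_def \<gamma>_def by (simp add: sum_divide_distrib power_divide mult.commute)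
      finally show ?thesis using \<open>n > 0\<close> by (simp add: pos_le_divide_eq)
    qed
  qed simp
  also have "\<dots> = D_alpha \<alpha> K p q" unfolding D_eq d_def by simp
  finally show ?thesis using \<open>n > 0\<close> unfolding n_def d_def
    by (simp add: pos_le_divide_eq mult.commute)
qed

lemma upper:
  assumes v: "v \<in> T_set K" and g: "\<gamma> \<in> relint_simplex K" and "\<epsilon> > 0"
  shows "\<exists>p q. p \<in> relint_simplex K \<and> q \<in> relint_simplex K \<and> (\<exists>k<K. p k \<noteq> q k) \<and>
     2 * (D_alpha \<alpha> K p q / (norm1 K (\<lambda>k. p k - q k))^2)
       \<le> (\<Sum>k<K. (v k)^2 * (\<gamma> k) powr (\<alpha> - 2)) + \<epsilon>"
proof -
  define V where "V = (\<Sum>k<K. (v k)^2)"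
  define S where "S = (\<Sum>k<K. (v k)^2 * (\<gamma> k) powr (\<alpha> - 2))"
  have "V \<ge> 0" unfolding V_def by (simp add: sum_nonneg)
  define e where "e = \<epsilon> / (V + 1)"
  have "e > 0" unfolding e_def using \<open>V \<ge> 0\<close> \<open>\<epsilon> > 0\<close> by simp
  have eV: "e * V \<le> \<epsilon>"
  proof -
    have "e * V = \<epsilon> * (V / (V + 1))" unfolding e_def by simp
    also have "\<dots> \<le> \<epsilon> * 1"
      using \<open>V \<ge> 0\<close> \<open>\<epsilon> > 0\<close> by (intro mult_left_mono) auto
    finally show ?thesis by simp
  qed
  have gk: "0 < \<gamma> k" "\<gamma> k < 1" if "k < K" for k using g that unfolding relint_simplex_def by auto
  have "\<forall>k\<in>{..<K}. eventually (\<lambda>s. 0 < \<gamma> k + s * v k \<and> \<gamma> k + s * v k < 1 \<and>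
           (\<gamma> k + s * v k) powr (\<alpha> - 2) < \<gamma> k powr (\<alpha> - 2) + e) (at_right 0)"
  proof
    fix k assume "k \<in> {..<K}"
    then have k: "0 < \<gamma> k" "\<gamma> k < 1" using gk by auto
    have t1: "((\<lambda>s. \<gamma> k + s * v k) \<longlongrightarrow> \<gamma> k) (at_right 0)"
      by (auto intro!: tendsto_eq_intros)
    have t2: "((\<lambda>s. (\<gamma> k + s * v k) powr (\<alpha> - 2)) \<longlongrightarrow> \<gamma> k powr (\<alpha> - 2)) (at_right 0)"
      by (rule tendsto_powr[OF t1 tendsto_const]) (use k in auto)
    show "eventually (\<lambda>s. 0 < \<gamma> k + s * v k \<and> \<gamma> k + s * v k < 1 \<and>
           (\<gamma> k + s * v k) powr (\<alpha> - 2) < \<gamma> k powr (\<alpha> - 2) + e) (at_right 0)"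
      using \<open>e > 0\<close>
      by (intro eventually_conj order_tendstoD(1)[OF t1 k(1)] order_tendstoD(2)[OF t1 k(2)]
            order_tendstoD(2)[OF t2]) simp
  qed
  then have "eventually (\<lambda>s. \<forall>k\<in>{..<K}. 0 < \<gamma> k + s * v k \<and> \<gamma> k + s * v k < 1 \<and>
           (\<gamma> k + s * v k) powr (\<alpha> - 2) < \<gamma> k powr (\<alpha> - 2) + e) (at_right 0)"
    by (intro eventually_ball_finite) auto
  then obtain b where b: "b > 0" and bP: "\<And>s k. 0 < s \<Longrightarrow> s < b \<Longrightarrow> k < K \<Longrightarrow>
      0 < \<gamma> k + s * v k \<and> \<gamma> k + s * v k < 1 \<and>
           (\<gamma> k + s * v k) powr (\<alpha> - 2) < \<gamma> k powr (\<alpha> - 2) + e"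
    unfolding eventually_at_right_field by auto
  define t where "t = b / 2"
  have t: "0 < t" "t < b" unfolding t_def using b by auto
  define p where "p k = \<gamma> k + t * v k" for k
  have sv: "(\<Sum>k<K. v k) = 0" "norm1 K v = 1" using v unfolding T_set_def by auto
  have prel: "p \<in> relint_simplex K"
  proof -
    have "\<forall>k<K. 0 < p k \<and> p k < 1" using bP[OF t] unfolding p_def by auto
    moreover have "(\<Sum>k<K. p k) = 1" using g sv unfolding p_def relint_simplex_def
      by (simp add: sum.distrib sum_distrib_left[symmetric])
    ultimately show ?thesis unfolding relint_simplex_def by simp
  qed
  obtain k0 where k0: "k0 < K" "v k0 \<noteq> 0"
  proof (rule ccontr)
    assume "\<not> thesis"
    with that have "\<forall>k<K. v k = 0" by blast
    then have "norm1 K v = 0" unfolding norm1_def by simp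
    with sv show False by simp
  qed
  have ne: "\<exists>k<K. p k \<noteq> \<gamma> k" using k0 t unfolding p_def by auto
  have nrm: "norm1 K (\<lambda>k. p k - \<gamma> k) = t"
    using sv t unfolding norm1_def p_def by (simp add: abs_mult sum_distrib_left[symmetric])
  have "- (S + e * V) * t^2 / 2 \<le>
      (\<Sum>k<K. (\<lambda>x. - fa \<alpha> x) (\<gamma> k + t * v k) - (\<lambda>x. - fa \<alpha> x) (\<gamma> k)
          - (\<lambda>x. - fa1 \<alpha> x) (\<gamma> k) * (t * v k))"
  proof (rule taylor2_ge[where gdd = "\<lambda>x. - (x powr (\<alpha> - 2))"])
    show "\<And>x. 0 < x \<Longrightarrow> ((\<lambda>x. - fa \<alpha> x) has_real_derivative - fa1 \<alpha> x) (at x)"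
      by (intro DERIV_minus fa_deriv)
    show "\<And>x. 0 < x \<Longrightarrow> ((\<lambda>x. - fa1 \<alpha> x) has_real_derivative - (x powr (\<alpha> - 2))) (at x)"
      by (intro DERIV_minus fa1_deriv)
    show "0 < \<gamma> k + s * v k" if "0 \<le> s" "s \<le> t" "k < K" for s k
    proof (cases "s = 0")
      case True then show ?thesis using gk that by simp
    next
      case False then show ?thesis using bP[of s k] that t by auto
    qed
    show "- (S + e * V) \<le> (\<Sum>k<K. - ((\<gamma> k + s * v k) powr (\<alpha> - 2)) * (v k)^2)"
      if s: "0 \<le> s" "s \<le> t" for s
    proof -
      have "(\<Sum>k<K. ((\<gamma> k + s * v k) powr (\<alpha> - 2)) * (v k)^2)
          \<le> (\<Sum>k<K. (\<gamma> k powr (\<alpha> - 2) + e) * (v k)^2)"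
      proof (rule sum_mono)
        fix k assume "k \<in> {..<K}"
        then have "(\<gamma> k + s * v k) powr (\<alpha> - 2) \<le> \<gamma> k powr (\<alpha> - 2) + e"
          using bP[of s k] s t \<open>e > 0\<close> by (cases "s = 0") (auto intro: less_imp_le)
        then show "((\<gamma> k + s * v k) powr (\<alpha> - 2)) * (v k)^2 \<le> (\<gamma> k powr (\<alpha> - 2) + e) * (v k)^2"
          by (intro mult_right_mono) auto
      qed
      also have "\<dots> = S + e * V" unfolding S_def V_def
        by (simp add: algebra_simps sum.distrib sum_distrib_left)
      finally show ?thesis by (simp add: sum_negf)
    qed
  qed (use t in simp)
  also have "\<dots> = - D_alpha \<alpha> K p \<gamma>"
    unfolding D_eq p_def by (simp add: sum_negf[symmetric] algebra_simps)
  finally have "D_alpha \<alpha> K p \<gamma> \<le> (S + e * V) * t^2 / 2" by (simp add: algebra_simps)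
  then have "2 * (D_alpha \<alpha> K p \<gamma> / t^2) \<le> S + e * V"
    using t by (simp add: divide_le_eq field_simps)
  then have "2 * (D_alpha \<alpha> K p \<gamma> / (norm1 K (\<lambda>k. p k - \<gamma> k))^2) \<le> S + \<epsilon>"
    using eV nrm by simp
  then show ?thesis using prel g ne unfolding S_def by blast
qed

theorem proposition1:
  fixes K :: nat and \<alpha> :: real
  assumes "K \<ge> 2"
  shows "C_alpha \<alpha> K = Inf {(\<Sum>k<K. (v k)^2 * (\<gamma> k) powr (\<alpha> - 2)) | v \<gamma>.
                 v \<in> T_set K \<and> \<gamma> \<in> relint_simplex K}"
proof -
  define A where "A = {D_alpha \<alpha> K p q / (norm1 K (\<lambda>k. p k - q k))^2 | p q.
      p \<in> relint_simplex K \<and> q \<in> relint_simplex K \<and> (\<exists>k<K. p k \<noteq> q k)}"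
  define B where "B = {(\<Sum>k<K. (v k)^2 * (\<gamma> k) powr (\<alpha> - 2)) | v \<gamma>.
                 v \<in> T_set K \<and> \<gamma> \<in> relint_simplex K}"
  have C: "C_alpha \<alpha> K = 2 * Inf A" unfolding C_alpha_def A_def by simp
  define v0 :: "nat \<Rightarrow> real" where "v0 k = (if k = 0 then 1/2 else 0) - (if k = 1 then 1/2 else 0)" for k
  define g0 :: "nat \<Rightarrow> real" where "g0 k = 1 / real K" for k
  have "v0 \<in> T_set K"
  proof -
    have a: "\<bar>v0 k\<bar> = (if k = 0 then 1/2 else 0) + (if k = 1 then 1/2 else 0)" for k
      unfolding v0_def by auto
    have "norm1 K v0 = 1" unfolding norm1_def a using assms
      by (simp add: sum.distrib)
    moreover have "(\<Sum>k<K. v0 k) = 0" unfolding v0_def using assms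
      by (simp add: sum_subtractf)
    ultimately show ?thesis unfolding T_set_def by simp
  qed
  moreover have "g0 \<in> relint_simplex K"
    unfolding relint_simplex_def g0_def using assms by auto
  ultimately have Bne: "B \<noteq> {}" unfolding B_def by blast
  have Bbdd: "bdd_below B" unfolding B_def bdd_below_def
    by (rule exI[of _ 0]) (auto intro!: sum_nonneg)
  have Rlb: "Inf B \<le> (\<Sum>k<K. (v k)^2 * (\<gamma> k) powr (\<alpha> - 2))"
    if "v \<in> T_set K" "\<gamma> \<in> relint_simplex K" for v \<gamma>
    by (rule cInf_lower[OF _ Bbdd]) (use that in \<open>auto simp: B_def\<close>)
  have Alb: "Inf B / 2 \<le> a" if "a \<in> A" for a
    using that lower[OF _ _ _ Rlb] unfolding A_def by blast
  have Aup: "\<exists>a\<in>A. 2 * a \<le> x + \<epsilon>" if xB: "x \<in> B" and "\<epsilon> > 0" for x \<epsilon>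
  proof -
    obtain v \<gamma> where "x = (\<Sum>k<K. (v k)^2 * (\<gamma> k) powr (\<alpha> - 2))" "v \<in> T_set K" "\<gamma> \<in> relint_simplex K"
      using xB unfolding B_def by blast
    with upper[OF this(2,3) \<open>\<epsilon> > 0\<close>, of \<alpha>] show ?thesis unfolding A_def by blast
  qed
  have Ane: "A \<noteq> {}" using Bne Aup[of _ 1] by fastforce
  have Abdd: "bdd_below A" unfolding bdd_below_def using Alb by blast
  have "Inf B / 2 \<le> Inf A" using Ane Alb by (intro cInf_greatest) auto
  moreover have "2 * Inf A \<le> Inf B"
  proof (rule cInf_greatest[OF Bne])
    fix x assume x: "x \<in> B"
    show "2 * Inf A \<le> x"
    proof (rule field_le_epsilon)
      fix \<epsilon> :: real assume "\<epsilon> > 0"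
      then obtain a where "a \<in> A" "2 * a \<le> x + \<epsilon>" using Aup[OF x] by blast
      moreover have "Inf A \<le> a" by (rule cInf_lower[OF \<open>a \<in> A\<close> Abdd])
      ultimately show "2 * Inf A \<le> x + \<epsilon>" by linarith
    qed
  qed
  ultimately show ?thesis unfolding C B_def[symmetric] by linarith
qed

end
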